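(* Let $X$ and $\varepsilon$ be independent real random variables and $Y=X+\varepsilon$. Suppose $P(X\in\{\xi_\ell\}_{\ell\in\mathbb{N}_0})=1$ for real numbers $\xi_0<\xi_1<\xi_2<\cdots$, and $F_X\{\xi_0\}>0$. Suppose $\varepsilon$ is purely discrete with (countable) set of atoms $\mathbb{T}_\varepsilon$, and there exists $z_0\in\mathbb{T}_\varepsilon$ with $F_\varepsilon(z_0-)=0$. Define $p_X(\ell):=F_X\{\xi_\ell\}\mathbf 1_{\mathbb{N}_0}(\ell)$, $$\ddot p_{\varepsilon,+}(\ell,z):=\Big(\delta_{z,0}-\frac{F_\varepsilon\{z_0+\xi_\ell-\xi_{\ell-z}\}}{F_\varepsilon\{z_0\}}\mathbf 1_{\{0,\dots,\ell\}}(z)\Big)\mathbf 1_{\mathbb{N}_0}(\ell),\qquad \ddot p_Y(\ell):=\frac{F_Y\{z_0+\xi_\ell\}}{F_\varepsilon\{z_0\}}\mathbf 1_{\mathbb{N}_0}(\ell)$$ for $\ell,z\in\mathbb{Z}$. Then $$p_X(\ell)=\sum_{z\in\mathbb{Z}}\ddot p_Y(\ell-z)\,\beta\{\ddot p_{\varepsilon,+}\}(\ell,z)\qquad(\ell\in\mathbb{Z}).$$ Moreover, if there exists $s>0$ with $\xi_\ell=\xi_0+s\ell$ for all $\ell\in\mathbb{N}_0$, then with $\ddot u_{\varepsilon,+}(z):=\ddot p_{\varepsilon,+}(z,z)$, $$F_X(\xi)=(\Theta\{\ddot p_Y\}*\Theta\{\gamma\{\ddot u_{\varepsilon,+}\}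\})\Big(\frac{\xi-\xi_0}{s}\Big)\qquad(\xi\in\mathbb{R}).$$
   Context: $F_B$ denotes the distribution function of a random variable $B$, $F_B\{x\}:=P(B=x)$, $F_B(x-):=P(B<x)$. $\delta_{z,0}=1$ if $z=0$, else $0$. For a double sequence $\ddot p(\ell,z)$ vanishing for $z<0$: $\ddot p^{*0}(\ell,z):=\delta_{z,0}$, $\ddot p^{*j}(\ell,z):=\sum_{z_1\in\mathbb{Z}}\ddot p(\ell,z_1)\ddot p^{*(j-1)}(\ell-z_1,z-z_1)$ for $j\ge1$, and $\beta\{\ddot p\}(\ell,z):=\sum_{j=0}^{z}\ddot p^{*j}(\ell,z)$ (empty sum $=0$). For a single sequence $\ddot u$ vanishing on negative integers: $\ddot u^{*0}(z):=\delta_{z,0}$, $\ddot u^{*j}(z):=\sum_y\ddot u(z-y)\ddot u^{*(j-1)}(y)$, $\gamma\{\ddot u\}(z):=\sum_{j=0}^z\ddot u^{*j}(z)$. For a sequence $p$ vanishing on negative integers, $\Theta\{p\}(\xi):=\sum_{z=-\infty}^{\lfloor\xi\rfloor}p(z)$, and for two such sequences $(\Theta\{p\}*\Theta\{q\})(x):=\sum_{z\in\mathbb{Z}}\Theta\{p\}(x-z)q(z)$ (the Stieltjes convolution, a finite sum). *)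

theory Defs
  imports "HOL-Probability.Probability"
begin

fun dconv_pow :: "(int \<Rightarrow> int \<Rightarrow> real) \<Rightarrow> nat \<Rightarrow> int \<Rightarrow> int \<Rightarrow> real" where
  "dconv_pow p 0 l z = (if z = 0 then 1 else 0)"
| "dconv_pow p (Suc j) l z = (\<Sum>\<^sub>\<infinity> z1::int. p l z1 * dconv_pow p j (l - z1) (z - z1))"

definition beta :: "(int \<Rightarrow> int \<Rightarrow> real) \<Rightarrow> int \<Rightarrow> int \<Rightarrow> real" where
  "beta p l z = (\<Sum>j\<in>{0..z}. dconv_pow p (nat j) l z)"

fun sconv_pow :: "(int \<Rightarrow> real) \<Rightarrow> nat \<Rightarrow> int \<Rightarrow> real" where
  "sconv_pow u 0 z = (if z = 0 then 1 else 0)"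
| "sconv_pow u (Suc j) z = (\<Sum>\<^sub>\<infinity> y::int. u (z - y) * sconv_pow u j y)"

definition gamma :: "(int \<Rightarrow> real) \<Rightarrow> int \<Rightarrow> real" where
  "gamma u z = (\<Sum>j\<in>{0..z}. sconv_pow u (nat j) z)"

definition Theta :: "(int \<Rightarrow> real) \<Rightarrow> real \<Rightarrow> real" where
  "Theta p x = (\<Sum>\<^sub>\<infinity> z\<in>{..\<lfloor>x\<rfloor>}. p z)"

definition stieltjes_conv :: "(int \<Rightarrow> real) \<Rightarrow> (int \<Rightarrow> real) \<Rightarrow> real \<Rightarrow> real" where
  "stieltjes_conv p q x = (\<Sum>\<^sub>\<infinity> z::int. Theta p (x - of_int z) * q z)"

end

theory Submission
  imports Defs
begin


lemma dconv_zero: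
  assumes A: "\<And>l z1. z1 \<le> 0 \<Longrightarrow> p l z1 = 0"
  shows "z < int j \<Longrightarrow> dconv_pow p j l z = 0"
proof (induction j arbitrary: l z)
  case 0
  then show ?case by simp
next
  case (Suc j)
  show ?case unfolding dconv_pow.simps
  proof (rule infsum_0)
    fix z1 :: int
    show "p l z1 * dconv_pow p j (l - z1) (z - z1) = 0"
    proof (cases "z1 \<le> 0")
      case True then show ?thesis using A by simp
    next
      case False then have "z - z1 < int j" using Suc.prems by simp
      then show ?thesis using Suc.IH by simp
    qed
  qed
qed

lemma dconv_Suc_fin:
  assumes A: "\<And>l z1. z1 \<le> 0 \<Longrightarrow> p l z1 = 0"
  shows "dconv_pow p (Suc j) l z = (\<Sum>z1\<in>{1..z}. p l z1 * dconv_pow p j (l-z1) (z-z1))"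
proof -
  have "dconv_pow p (Suc j) l z = (\<Sum>\<^sub>\<infinity>z1\<in>{1..z}. p l z1 * dconv_pow p j (l-z1) (z-z1))"
    unfolding dconv_pow.simps
  proof (rule infsum_cong_neutral)
    fix z1 assume "z1 \<in> UNIV - {1..z}"
    then have "z1 \<le> 0 \<or> z - z1 < int j" by auto
    then show "p l z1 * dconv_pow p j (l - z1) (z - z1) = 0"
      using A dconv_zero[where p=p, OF A] by auto
  qed auto
  then show ?thesis by simp
qed

lemma beta_N:
  assumes A: "\<And>l z1. z1 \<le> 0 \<Longrightarrow> p l z1 = 0" and N: "z \<le> int N"
  shows "beta p l z = (\<Sum>j\<le>N. dconv_pow p j l z)"
proof (cases "z < 0")
  case True
  then show ?thesis unfolding beta_def using dconv_zero[where p=p, OF A, where z=z] by simp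
next
  case False
  have e: "{0..z} = int ` {..nat z}" using False image_int_atLeastAtMost[of 0 "nat z"]
    by (simp add: atMost_atLeast0)
  have "beta p l z = (\<Sum>j\<le>nat z. dconv_pow p j l z)"
    unfolding beta_def e by (subst sum.reindex) auto
  also have "\<dots> = (\<Sum>j\<le>N. dconv_pow p j l z)"
  proof (rule sum.mono_neutral_left)
    show "\<forall>i\<in>{..N} - {..nat z}. dconv_pow p i l z = 0"
    proof
      fix i assume "i \<in> {..N} - {..nat z}"
      then have "z < int i" using False by auto
      then show "dconv_pow p i l z = 0" using dconv_zero[where p=p, OF A] by blast
    qed
  qed (use N False in auto)
  finally show ?thesis .
qed

lemma beta_rec:
  assumes A: "\<And>l z1. z1 \<le> 0 \<Longrightarrow> p l z1 = 0"
  shows "beta p l z = (if z=0 then 1 else 0) + (\<Sum>z1\<in>{1..z}. p l z1 * beta p (l-z1) (z-z1))"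
proof (cases "z < 0")
  case True
  then show ?thesis by (simp add: beta_def)
next
  case False
  define N where "N = nat z"
  have "beta p l z = (\<Sum>j\<le>Suc N. dconv_pow p j l z)"
    using beta_N[where p=p, OF A, where z=z and N="Suc N" and l=l] False N_def by simp
  also have "\<dots> = (if z=0 then 1 else 0) + (\<Sum>j\<le>N. dconv_pow p (Suc j) l z)"
    by (simp only: sum.atMost_Suc_shift dconv_pow.simps(1))
  also have "(\<Sum>j\<le>N. dconv_pow p (Suc j) l z) = (\<Sum>j\<le>N. \<Sum>z1\<in>{1..z}. p l z1 * dconv_pow p j (l-z1) (z-z1))"
    using dconv_Suc_fin[where p=p, OF A] by simp
  also have "\<dots> = (\<Sum>z1\<in>{1..z}. p l z1 * (\<Sum>j\<le>N. dconv_pow p j (l-z1) (z-z1)))"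
    by (subst sum.swap) (simp add: sum_distrib_left)
  also have "\<dots> = (\<Sum>z1\<in>{1..z}. p l z1 * beta p (l-z1) (z-z1))"
  proof (rule sum.cong[OF refl])
    fix z1 assume "z1 \<in> {1..z}"
    then have "z - z1 \<le> int N" using N_def False by auto
    then show "p l z1 * (\<Sum>j\<le>N. dconv_pow p j (l-z1) (z-z1)) = p l z1 * beta p (l-z1) (z-z1)"
      using beta_N[where p=p, OF A] by simp
  qed
  finally show ?thesis .
qed

lemma sum_shift_int:
  "(\<Sum>z\<in>{a..b::int}. g (z - a)) = (\<Sum>w\<in>{0..b-a}. (g w :: real))"
  by (rule sum.reindex_bij_witness[where i="\<lambda>w. w + a" and j="\<lambda>z. z - a"]) auto

lemma main_alg:
  assumes A: "\<And>l z1. z1 \<le> 0 \<Longrightarrow> p l z1 = 0"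
    and rec: "\<And>l. 0 \<le> l \<Longrightarrow> r l = q l + (\<Sum>z1\<in>{1..l}. p l z1 * r (l - z1))"
  shows "0 \<le> l \<Longrightarrow> r l = (\<Sum>z\<in>{0..l}. q (l-z) * beta p l z)"
proof -
  have *: "r (int n) = (\<Sum>z\<in>{0..int n}. q (int n-z) * beta p (int n) z)" for n
  proof (induction n rule: less_induct)
    case (less n)
    define l where "l = int n"
    have "(\<Sum>z\<in>{0..l}. q (l-z) * beta p l z)
       = (\<Sum>z\<in>{0..l}. (if z = 0 then q l else 0)) + (\<Sum>z\<in>{0..l}. \<Sum>z1\<in>{1..z}. q (l-z) * p l z1 * beta p (l-z1) (z-z1))"
      unfolding sum.distrib[symmetric]
    proof (rule sum.cong[OF refl])
      fix z assume "z \<in> {0..l}"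
      have "q (l - z) * beta p l z = q (l - z) * ((if z=0 then 1 else 0) + (\<Sum>z1\<in>{1..z}. p l z1 * beta p (l-z1) (z-z1)))"
        by (rule arg_cong[OF beta_rec[where p=p, OF A]])
      also have "\<dots> = (if z = 0 then q l else 0) + (\<Sum>z1\<in>{1..z}. q (l-z) * p l z1 * beta p (l-z1) (z-z1))"
        by (simp add: distrib_left sum_distrib_left mult.assoc)
      finally show "q (l - z) * beta p l z = (if z = 0 then q l else 0) + (\<Sum>z1\<in>{1..z}. q (l-z) * p l z1 * beta p (l-z1) (z-z1))" .
    qed
    also have "(\<Sum>z\<in>{0..l}. (if z = 0 then q l else 0)) = q l" using l_def by simp
    also have "(\<Sum>z\<in>{0..l}. \<Sum>z1\<in>{1..z}. q (l-z) * p l z1 * beta p (l-z1) (z-z1))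
       = (\<Sum>z\<in>{0..l}. \<Sum>z1\<in>{y. y\<in>{1..l} \<and> y \<le> z}. q (l-z) * p l z1 * beta p (l-z1) (z-z1))"
      by (rule sum.cong[OF refl], rule sum.cong) auto
    also have "\<dots> = (\<Sum>z1\<in>{1..l}. \<Sum>z\<in>{x. x\<in>{0..l} \<and> z1 \<le> x}. q (l-z) * p l z1 * beta p (l-z1) (z-z1))"
      by (rule sum.swap_restrict) auto
    also have "\<dots> = (\<Sum>z1\<in>{1..l}. p l z1 * (\<Sum>z\<in>{z1..l}. q (l-z) * beta p (l-z1) (z-z1)))"
      by (rule sum.cong[OF refl]) (auto simp: sum_distrib_left algebra_simps intro!: sum.cong)
    also have "\<dots> = (\<Sum>z1\<in>{1..l}. p l z1 * r (l - z1))"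
    proof (rule sum.cong[OF refl])
      fix z1 assume z1: "z1 \<in> {1..l}"
      have "(\<Sum>z\<in>{z1..l}. q (l-z) * beta p (l-z1) (z-z1)) = (\<Sum>w\<in>{0..l-z1}. q (l-z1-w) * beta p (l-z1) w)"
        using sum_shift_int[of "\<lambda>w. q (l-z1-w) * beta p (l-z1) w" z1 l] by (simp add: algebra_simps)
      also have "\<dots> = r (l - z1)"
        using less.IH[of "nat (l - z1)"] z1 l_def by auto
      finally show "p l z1 * (\<Sum>z\<in>{z1..l}. q (l-z) * beta p (l-z1) (z-z1)) = p l z1 * r (l - z1)" by simp
    qed
    finally show ?case using rec[of l] l_def by simp
  qed
  then show "0 \<le> l \<Longrightarrow> r l = (\<Sum>z\<in>{0..l}. q (l-z) * beta p l z)"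
    using * by (metis nonneg_int_cases)
qed


lemma sconv_zero:
  assumes U: "\<And>z. z < 0 \<Longrightarrow> u z = 0"
  shows "y < 0 \<Longrightarrow> sconv_pow u j y = 0"
proof (induction j arbitrary: y)
  case 0 then show ?case by simp
next
  case (Suc j)
  show ?case unfolding sconv_pow.simps
  proof (rule infsum_0)
    fix y' :: int
    show "u (y - y') * sconv_pow u j y' = 0"
      using Suc U by (cases "y' < 0") auto
  qed
qed

lemma dconv_sconv:
  assumes A: "\<And>l z1. z1 \<le> 0 \<Longrightarrow> p l z1 = 0"
    and U: "\<And>z. z < 0 \<Longrightarrow> u z = 0"
    and PU: "\<And>l z1. 0 \<le> z1 \<Longrightarrow> z1 \<le> l \<Longrightarrow> p l z1 = u z1"
  shows "0 \<le> z \<Longrightarrow> z \<le> l \<Longrightarrow> dconv_pow p j l z = sconv_pow u j z"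
proof (induction j arbitrary: l z)
  case 0 then show ?case by simp
next
  case (Suc j)
  have "sconv_pow u (Suc j) z = (\<Sum>\<^sub>\<infinity>z1::int. u z1 * sconv_pow u j (z - z1))"
    unfolding sconv_pow.simps
    by (rule infsum_reindex_bij_witness[where i="\<lambda>a. z - a" and j="\<lambda>a. z - a"]) auto
  also have "\<dots> = dconv_pow p (Suc j) l z"
    unfolding dconv_pow.simps
  proof (rule infsum_cong)
    fix z1 :: int
    show "u z1 * sconv_pow u j (z - z1) = p l z1 * dconv_pow p j (l - z1) (z - z1)"
    proof (cases "z1 \<le> 0")
      case True
      have "u z1 = 0"
      proof (cases "z1 < 0")
        case True then show ?thesis using U by simp
      next
        case False then have "z1 = 0" using \<open>z1 \<le> 0\<close> by simp
        then show ?thesis using PU[of 0 0] A[of 0 0] by simp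
      qed
      then show ?thesis using A[OF True] by simp
    next
      case False
      show ?thesis
      proof (cases "z < z1")
        case True
        then show ?thesis using sconv_zero[where u=u, OF U, of "z - z1"] dconv_zero[where p=p, OF A, of "z - z1" j] by simp
      next
        case False
        then show ?thesis using PU[of z1 l] Suc.IH[of "z - z1" "l - z1"] Suc.prems \<open>\<not> z1 \<le> 0\<close> by simp
      qed
    qed
  qed
  finally show ?case by simp
qed

lemma beta_gamma:
  assumes A: "\<And>l z1. z1 \<le> 0 \<Longrightarrow> p l z1 = 0"
    and U: "\<And>z. z < 0 \<Longrightarrow> u z = 0"
    and PU: "\<And>l z1. 0 \<le> z1 \<Longrightarrow> z1 \<le> l \<Longrightarrow> p l z1 = u z1"
    and z: "0 \<le> z" "z \<le> l"
  shows "beta p l z = gamma u z"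
  unfolding beta_def gamma_def
  by (rule sum.cong[OF refl]) (use dconv_sconv[where p=p and u=u, OF A U PU] z in auto)


context prob_space
begin

lemma AE_range:
  assumes "\<P>(\<omega> in M. X \<omega> \<in> range xi) = 1"
  shows "AE \<omega> in M. X \<omega> \<in> range xi"
  using AE_prob_1[OF assms] by (auto elim: AE_mp)

lemma AE_ge:
  fixes eps :: "'a \<Rightarrow> real"
  assumes eps: "eps \<in> borel_measurable M" and "\<P>(\<omega> in M. eps \<omega> < z0) = 0"
  shows "AE \<omega> in M. z0 \<le> eps \<omega>"
proof -
  have S: "{\<omega>\<in>space M. eps \<omega> < z0} \<in> sets M"
  proof -
    have "eps -` {..<z0} \<inter> space M \<in> sets M" by (rule measurable_sets[OF eps]) auto
    moreover have "eps -` {..<z0} \<inter> space M = {\<omega>\<in>space M. eps \<omega> < z0}" by auto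
    ultimately show ?thesis by simp
  qed
  have "emeasure M {\<omega>\<in>space M. eps \<omega> < z0} = 0"
    using assms(2) S by (simp add: emeasure_eq_measure)
  then show ?thesis
    by (subst AE_iff_measurable[OF S]) auto
qed

lemma prob_Y:
  fixes X eps :: "'a \<Rightarrow> real" and xi :: "nat \<Rightarrow> real"
  assumes X: "X \<in> borel_measurable M" and eps: "eps \<in> borel_measurable M"
    and ind: "indep_var borel X borel eps"
    and sm: "strict_mono xi"
    and rg: "\<P>(\<omega> in M. X \<omega> \<in> range xi) = 1"
    and lo: "\<P>(\<omega> in M. eps \<omega> < z0) = 0"
  shows "\<P>(\<omega> in M. X \<omega> + eps \<omega> = z0 + xi n)
     = (\<Sum>k\<le>n. \<P>(\<omega> in M. X \<omega> = xi k) * \<P>(\<omega> in M. eps \<omega> = z0 + xi n - xi k))"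
proof -
  define E where "E k = {\<omega>\<in>space M. X \<omega> = xi k \<and> eps \<omega> = z0 + xi n - xi k}" for k
  have Em: "E k \<in> sets M" for k
  proof -
    have "X -` {xi k} \<inter> space M \<in> sets M" by (rule measurable_sets[OF X]) auto
    moreover have "eps -` {z0 + xi n - xi k} \<inter> space M \<in> sets M" by (rule measurable_sets[OF eps]) auto
    moreover have "E k = (X -` {xi k} \<inter> space M) \<inter> (eps -` {z0 + xi n - xi k} \<inter> space M)"
      unfolding E_def by auto
    ultimately show ?thesis by simp
  qed
  have Ym: "{\<omega> \<in> space M. X \<omega> + eps \<omega> = z0 + xi n} \<in> sets M"
  proof -
    have "(\<lambda>\<omega>. X \<omega> + eps \<omega>) \<in> borel_measurable M" using X eps by (rule borel_measurable_add)
    then have "(\<lambda>\<omega>. X \<omega> + eps \<omega>) -` {z0 + xi n} \<inter> space M \<in> sets M" by (rule measurable_sets) auto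
    moreover have "(\<lambda>\<omega>. X \<omega> + eps \<omega>) -` {z0 + xi n} \<inter> space M = {\<omega> \<in> space M. X \<omega> + eps \<omega> = z0 + xi n}" by auto
    ultimately show ?thesis by simp
  qed
  have "\<P>(\<omega> in M. X \<omega> + eps \<omega> = z0 + xi n) = measure M (\<Union>k\<in>{..n}. E k)"
  proof (rule measure_eq_AE)
    show "AE \<omega> in M. (\<omega> \<in> {\<omega> \<in> space M. X \<omega> + eps \<omega> = z0 + xi n}) = (\<omega> \<in> (\<Union>k\<in>{..n}. E k))"
      using AE_range[OF rg] AE_ge[OF eps lo] AE_space
    proof eventually_elim
      case (elim \<omega>)
      then obtain m where m: "X \<omega> = xi m" by auto
      show ?case
      proof
        assume "\<omega> \<in> {\<omega> \<in> space M. X \<omega> + eps \<omega> = z0 + xi n}"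
        then have e: "eps \<omega> = z0 + xi n - xi m" using m by auto
        then have "xi m \<le> xi n" using elim by simp
        then have "m \<le> n" using sm by (simp add: strict_mono_less_eq)
        then show "\<omega> \<in> (\<Union>k\<in>{..n}. E k)" using e m elim unfolding E_def by auto
      qed (auto simp: E_def)
    qed
  qed (use Ym Em in auto)
  also have "\<dots> = (\<Sum>k\<in>{..n}. measure M (E k))"
  proof (rule finite_measure_finite_Union)
    show "disjoint_family_on E {..n}"
      unfolding disjoint_family_on_def E_def using strict_mono_eq[OF sm] by auto
  qed (use Em in auto)
  also have "\<dots> = (\<Sum>k\<le>n. \<P>(\<omega> in M. X \<omega> = xi k) * \<P>(\<omega> in M. eps \<omega> = z0 + xi n - xi k))"
  proof (rule sum.cong[OF refl])
    fix k
    have "measure M (E k) = prob ((\<lambda>x. (X x, eps x)) -` ({xi k} \<times> {z0 + xi n - xi k}) \<inter> space M)"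
      unfolding E_def by (rule arg_cong[where f="measure M"]) auto
    also have "\<dots> = prob (X -` {xi k} \<inter> space M) * prob (eps -` {z0 + xi n - xi k} \<inter> space M)"
      by (rule indep_varD[OF ind]) auto
    also have "\<dots> = \<P>(\<omega> in M. X \<omega> = xi k) * \<P>(\<omega> in M. eps \<omega> = z0 + xi n - xi k)"
      by (auto intro!: arg_cong2[where f="(*)"] arg_cong[where f="measure M"])
    finally show "measure M (E k) = \<P>(\<omega> in M. X \<omega> = xi k) * \<P>(\<omega> in M. eps \<omega> = z0 + xi n - xi k)" .
  qed
  finally show ?thesis .
qed

lemma prob_X_le:
  fixes X :: "'a \<Rightarrow> real" and xi :: "nat \<Rightarrow> real"
  assumes X: "X \<in> borel_measurable M"
    and sm: "strict_mono xi"
    and rg: "\<P>(\<omega> in M. X \<omega> \<in> range xi) = 1"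
    and fin: "finite {k. xi k \<le> x}"
  shows "\<P>(\<omega> in M. X \<omega> \<le> x) = (\<Sum>k\<in>{k. xi k \<le> x}. \<P>(\<omega> in M. X \<omega> = xi k))"
proof -
  define E where "E k = {\<omega>\<in>space M. X \<omega> = xi k}" for k
  have Em: "E k \<in> sets M" for k
  proof -
    have "X -` {xi k} \<inter> space M \<in> sets M" by (rule measurable_sets[OF X]) auto
    moreover have "E k = X -` {xi k} \<inter> space M" unfolding E_def by auto
    ultimately show ?thesis by simp
  qed
  have Xm: "{\<omega> \<in> space M. X \<omega> \<le> x} \<in> sets M"
  proof -
    have "X -` {..x} \<inter> space M \<in> sets M" by (rule measurable_sets[OF X]) auto
    moreover have "X -` {..x} \<inter> space M = {\<omega> \<in> space M. X \<omega> \<le> x}" by auto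
    ultimately show ?thesis by simp
  qed
  have "\<P>(\<omega> in M. X \<omega> \<le> x) = measure M (\<Union>k\<in>{k. xi k \<le> x}. E k)"
  proof (rule measure_eq_AE)
    show "AE \<omega> in M. (\<omega> \<in> {\<omega> \<in> space M. X \<omega> \<le> x}) = (\<omega> \<in> (\<Union>k\<in>{k. xi k \<le> x}. E k))"
      using AE_range[OF rg] AE_space
    proof eventually_elim
      case (elim \<omega>)
      then obtain m where m: "X \<omega> = xi m" by auto
      then show ?case using elim unfolding E_def by auto
    qed
  qed (use Xm Em fin in auto)
  also have "\<dots> = (\<Sum>k\<in>{k. xi k \<le> x}. measure M (E k))"
  proof (rule finite_measure_finite_Union)
    show "disjoint_family_on E {k. xi k \<le> x}"
      unfolding disjoint_family_on_def E_def using strict_mono_eq[OF sm] by auto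
  qed (use Em fin in auto)
  finally show ?thesis unfolding E_def .
qed

end


lemma main_lemma:
  fixes M :: "'a measure" and X eps :: "'a \<Rightarrow> real" and xi :: "nat \<Rightarrow> real" and z0 :: real
    and Fe :: "real \<Rightarrow> real" and pX pY uplus :: "int \<Rightarrow> real" and pplus :: "int \<Rightarrow> int \<Rightarrow> real"
  assumes PS: "prob_space M"
    and X: "X \<in> borel_measurable M" and eps: "eps \<in> borel_measurable M"
    and ind: "prob_space.indep_var M borel X borel eps"
    and sm: "strict_mono xi"
    and rg: "\<P>(\<omega> in M. X \<omega> \<in> range xi) = 1"
    and pos: "\<P>(\<omega> in M. eps \<omega> = z0) > 0"
    and lo: "\<P>(\<omega> in M. eps \<omega> < z0) = 0"
    and Fe: "Fe = (\<lambda>t. \<P>(\<omega> in M. eps \<omega> = t))"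
    and pX: "pX = (\<lambda>l::int. if 0 \<le> l then \<P>(\<omega> in M. X \<omega> = xi (nat l)) else 0)"
    and pplus: "pplus = (\<lambda>(l::int) (z::int). if 0 \<le> l then
                    (if z = 0 then 1 else 0)
                    - (if 0 \<le> z \<and> z \<le> l then Fe (z0 + xi (nat l) - xi (nat (l - z))) / Fe z0 else 0)
                  else 0)"
    and pY: "pY = (\<lambda>l::int. if 0 \<le> l then \<P>(\<omega> in M. X \<omega> + eps \<omega> = z0 + xi (nat l)) / Fe z0 else 0)"
    and uplus: "uplus = (\<lambda>z::int. pplus z z)"
  shows "(\<forall>l::int. pX l = (\<Sum>\<^sub>\<infinity> z::int. pY (l - z) * beta pplus l z))
      \<and> (\<forall>s>0. (\<forall>l. xi l = xi 0 + s * real l) \<longrightarrow>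
           (\<forall>x::real. \<P>(\<omega> in M. X \<omega> \<le> x) = stieltjes_conv pY (gamma uplus) ((x - xi 0) / s)))"
proof -
  interpret prob_space M by (rule PS)
  have Fz: "Fe z0 > 0" using pos Fe by simp
  have A: "pplus l z1 = 0" if "z1 \<le> 0" for l z1
    using that Fz by (auto simp: pplus)
  have rec: "pX l = pY l + (\<Sum>z1\<in>{1..l}. pplus l z1 * pX (l - z1))" if l0: "0 \<le> l" for l
  proof -
    obtain n where n: "l = int n" using l0 nonneg_int_cases by blast
    define F where "F z1 = pX (l - z1) * Fe (z0 + xi n - xi (nat (l - z1)))" for z1
    have "\<P>(\<omega> in M. X \<omega> + eps \<omega> = z0 + xi n)
        = (\<Sum>k\<le>n. \<P>(\<omega> in M. X \<omega> = xi k) * \<P>(\<omega> in M. eps \<omega> = z0 + xi n - xi k))"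
      by (rule prob_Y[OF X eps ind sm rg lo])
    also have "\<dots> = (\<Sum>z1\<in>{0..l}. F z1)"
      unfolding F_def Fe pX n
      by (rule sum.reindex_bij_witness[where i="\<lambda>z1. nat (int n - z1)" and j="\<lambda>k. int n - int k"]) auto
    also have "\<dots> = F 0 + (\<Sum>z1\<in>{1..l}. F z1)"
    proof -
      have "{0..l} = insert 0 {1..l}" using l0 by auto
      then show ?thesis by simp
    qed
    also have "F 0 = pX l * Fe z0" unfolding F_def n by simp
    finally have e: "\<P>(\<omega> in M. X \<omega> + eps \<omega> = z0 + xi n) = pX l * Fe z0 + (\<Sum>z1\<in>{1..l}. F z1)" .
    have "(\<Sum>z1\<in>{1..l}. pplus l z1 * pX (l - z1)) = (\<Sum>z1\<in>{1..l}. - F z1 / Fe z0)"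
      by (rule sum.cong[OF refl]) (auto simp: pplus F_def n)
    also have "\<dots> = - (\<Sum>z1\<in>{1..l}. F z1) / Fe z0"
      by (simp add: sum_divide_distrib sum_negf)
    finally have e2: "(\<Sum>z1\<in>{1..l}. pplus l z1 * pX (l - z1)) = - (\<Sum>z1\<in>{1..l}. F z1) / Fe z0" .
    have "pY l = (pX l * Fe z0 + (\<Sum>z1\<in>{1..l}. F z1)) / Fe z0"
      using e l0 n by (simp add: pY)
    then have h1: "Fe z0 * pY l = Fe z0 * pX l + (\<Sum>z1\<in>{1..l}. F z1)" using Fz by (simp add: field_simps)
    have h2: "Fe z0 * (\<Sum>z1\<in>{1..l}. pplus l z1 * pX (l - z1)) = - (\<Sum>z1\<in>{1..l}. F z1)"
      using e2 Fz by (simp add: field_simps)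
    have "Fe z0 * pX l = Fe z0 * (pY l + (\<Sum>z1\<in>{1..l}. pplus l z1 * pX (l - z1)))"
      unfolding distrib_left h1 h2 by simp
    then show ?thesis using Fz by simp
  qed
  have fin: "(\<Sum>\<^sub>\<infinity> z::int. pY (l - z) * beta pplus l z) = (\<Sum>z\<in>{0..l}. pY (l - z) * beta pplus l z)" for l
  proof -
    have "(\<Sum>\<^sub>\<infinity> z::int. pY (l - z) * beta pplus l z) = (\<Sum>\<^sub>\<infinity> z\<in>{0..l}. pY (l - z) * beta pplus l z)"
    proof (rule infsum_cong_neutral)
      fix z assume "z \<in> UNIV - {0..l}"
      then have "z < 0 \<or> l - z < 0" by auto
      then show "pY (l - z) * beta pplus l z = 0"
        by (auto simp: pY beta_def)
    qed auto
    then show ?thesis by simp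
  qed
  have part1: "pX l = (\<Sum>\<^sub>\<infinity> z::int. pY (l - z) * beta pplus l z)" for l
  proof (cases "0 \<le> l")
    case True
    then show ?thesis unfolding fin using main_alg[where p=pplus and r=pX and q=pY, OF A rec] by blast
  next
    case False
    then show ?thesis unfolding fin by (simp add: pX)
  qed
  have part2: "\<P>(\<omega> in M. X \<omega> \<le> x) = stieltjes_conv pY (gamma uplus) ((x - xi 0) / s)"
    if s: "s > 0" and lin: "\<forall>l. xi l = xi 0 + s * real l" for s x
  proof -
    define t where "t = (x - xi 0) / s"
    define L where "L = \<lfloor>t\<rfloor>"
    have dif: "xi (nat l) - xi (nat (l - z1)) = s * of_int z1" if "0 \<le> z1" "z1 \<le> l" for l z1
      using lin[rule_format, of "nat l"] lin[rule_format, of "nat (l - z1)"] that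
      by (simp add: algebra_simps)
    have PU: "pplus l z1 = uplus z1" if "0 \<le> z1" "z1 \<le> l" for l z1
    proof -
      have "z0 + xi (nat l) - xi (nat (l - z1)) = z0 + xi (nat z1) - xi (nat (z1 - z1))"
        using that dif[of z1 l] dif[of z1 z1] by simp
      then have "Fe (z0 + xi (nat l) - xi (nat (l - z1))) = Fe (z0 + xi (nat z1) - xi (nat (z1 - z1)))"
        by (rule arg_cong)
      then show ?thesis using that by (simp add: pplus uplus)
    qed
    have U: "uplus z = 0" if "z < 0" for z using that by (simp add: uplus pplus)
    have pXg: "pX l = (\<Sum>z\<in>{0..l}. pY (l-z) * gamma uplus z)" if "0 \<le> l" for l
      using main_alg[where p=pplus and r=pX and q=pY, OF A rec that]
        beta_gamma[where p=pplus and u=uplus, OF A U PU] by simp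
    have K: "{k. xi k \<le> x} = {k. int k \<le> L}"
    proof -
      have "xi k \<le> x \<longleftrightarrow> int k \<le> L" for k
      proof -
        have "xi k \<le> x \<longleftrightarrow> real k \<le> t"
          using lin[rule_format, of k] s by (simp add: t_def pos_le_divide_eq algebra_simps)
        also have "\<dots> \<longleftrightarrow> int k \<le> L" unfolding L_def by (simp add: le_floor_iff)
        finally show ?thesis .
      qed
      then show ?thesis by auto
    qed
    have finK: "finite {k. xi k \<le> x}" unfolding K
      by (rule finite_subset[of _ "{..nat L}"]) auto
    have "\<P>(\<omega> in M. X \<omega> \<le> x) = (\<Sum>k\<in>{k. xi k \<le> x}. \<P>(\<omega> in M. X \<omega> = xi k))"
      by (rule prob_X_le[OF X sm rg finK])
    also have "\<dots> = (\<Sum>l\<in>{0..L}. pX l)"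
      unfolding K pX
      by (rule sum.reindex_bij_witness[where i="nat" and j="int"]) auto
    also have "\<dots> = (\<Sum>l\<in>{0..L}. \<Sum>z\<in>{z. z \<in> {0..L} \<and> z \<le> l}. pY (l-z) * gamma uplus z)"
    proof (rule sum.cong[OF refl])
      fix l assume l: "l \<in> {0..L}"
      have "{z. z \<in> {0..L} \<and> z \<le> l} = {0..l}" using l by auto
      then show "pX l = (\<Sum>z\<in>{z. z \<in> {0..L} \<and> z \<le> l}. pY (l-z) * gamma uplus z)"
        using pXg l by simp
    qed
    also have "\<dots> = (\<Sum>z\<in>{0..L}. \<Sum>l\<in>{l. l \<in> {0..L} \<and> z \<le> l}. pY (l-z) * gamma uplus z)"
      by (rule sum.swap_restrict) auto
    also have "\<dots> = (\<Sum>z\<in>{0..L}. (\<Sum>w\<in>{0..L-z}. pY w) * gamma uplus z)"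
    proof (rule sum.cong[OF refl])
      fix z assume z: "z \<in> {0..L}"
      have "{l. l \<in> {0..L} \<and> z \<le> l} = {z..L}" using z by auto
      then show "(\<Sum>l\<in>{l. l \<in> {0..L} \<and> z \<le> l}. pY (l-z) * gamma uplus z) = (\<Sum>w\<in>{0..L-z}. pY w) * gamma uplus z"
        using sum_shift_int[of pY z L] by (simp add: sum_distrib_right[symmetric])
    qed
    also have "\<dots> = stieltjes_conv pY (gamma uplus) t"
    proof -
      have Th: "Theta pY (t - of_int z) = (\<Sum>w\<in>{0..L-z}. pY w)" for z
      proof -
        have "Theta pY (t - of_int z) = (\<Sum>\<^sub>\<infinity>w\<in>{..L-z}. pY w)"
          unfolding Theta_def L_def by simp
        also have "\<dots> = (\<Sum>\<^sub>\<infinity>w\<in>{0..L-z}. pY w)"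
          by (rule infsum_cong_neutral) (auto simp: pY)
        finally show ?thesis by simp
      qed
      have "stieltjes_conv pY (gamma uplus) t = (\<Sum>\<^sub>\<infinity>z\<in>{0..L}. Theta pY (t - of_int z) * gamma uplus z)"
        unfolding stieltjes_conv_def
      proof (rule infsum_cong_neutral)
        fix z assume "z \<in> UNIV - {0..L}"
        then have "z < 0 \<or> L < z" by auto
        then show "Theta pY (t - of_int z) * gamma uplus z = 0"
          by (auto simp: Th gamma_def)
      qed auto
      then show ?thesis by (simp add: Th)
    qed
    finally show ?thesis unfolding t_def .
  qed
  show ?thesis using part1 part2 by blast
qed


theorem corollary2:
  fixes M :: "'a measure" and X eps :: "'a \<Rightarrow> real" and xi :: "nat \<Rightarrow> real" and z0 :: real
  assumes "prob_space M"
    and "X \<in> borel_measurable M" and "eps \<in> borel_measurable M"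
    and "prob_space.indep_var M borel X borel eps"
    and "strict_mono xi"
    and "\<P>(\<omega> in M. X \<omega> \<in> range xi) = 1"
    and "\<P>(\<omega> in M. X \<omega> = xi 0) > 0"
    and "\<P>(\<omega> in M. eps \<omega> \<in> {t. \<P>(\<omega>' in M. eps \<omega>' = t) > 0}) = 1"
    and "\<P>(\<omega> in M. eps \<omega> = z0) > 0"
    and "\<P>(\<omega> in M. eps \<omega> < z0) = 0"
  shows
   "(let Y = (\<lambda>\<omega>. X \<omega> + eps \<omega>);
         Fe = (\<lambda>t. \<P>(\<omega> in M. eps \<omega> = t));
         pX = (\<lambda>l::int. if 0 \<le> l then \<P>(\<omega> in M. X \<omega> = xi (nat l)) else 0);
         pplus = (\<lambda>(l::int) (z::int). if 0 \<le> l then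
                    (if z = 0 then 1 else 0)
                    - (if 0 \<le> z \<and> z \<le> l then Fe (z0 + xi (nat l) - xi (nat (l - z))) / Fe z0 else 0)
                  else 0);
         pY = (\<lambda>l::int. if 0 \<le> l then \<P>(\<omega> in M. Y \<omega> = z0 + xi (nat l)) / Fe z0 else 0);
         uplus = (\<lambda>z::int. pplus z z)
     in (\<forall>l::int. pX l = (\<Sum>\<^sub>\<infinity> z::int. pY (l - z) * beta pplus l z))
      \<and> (\<forall>s>0. (\<forall>l. xi l = xi 0 + s * real l) \<longrightarrow>
           (\<forall>x::real. \<P>(\<omega> in M. X \<omega> \<le> x) = stieltjes_conv pY (gamma uplus) ((x - xi 0) / s))))"
    unfolding Let_def
  by (rule main_lemma[OF assms(1-5) assms(6) assms(9) assms(10) refl refl refl refl refl])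

end
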